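(* Let $x$ be fixed observed data, $p(x,z)$, $z\in\mathbb{R}^d$, a positive joint density differentiable in $z$, with $p(x):=\int p(x,z)\,dz$, and let $q$ be a probability density on $\mathbb{R}^d$; set $w(z):=p(x,z)/q(z)$. Let $\alpha\in[0,1)$, fix a point $z\in\mathbb{R}^d$ and a coordinate $r\in\{1,\dots,d\}$. For integers $M,K\ge1$ let $\{z_{m,j}:1\le m\le M,\ 1\le j\le K-1\}$ be i.i.d. with law $q$, put $g_m:=w(z)^{1-\alpha}/\big(\sum_{j=1}^{K-1}w(z_{m,j})^{1-\alpha}+w(z)^{1-\alpha}\big)$, and define $$g^r_{\alpha,M,K}(z):=\frac1M\sum_{m=1}^M\big(\alpha g_m+(1-\alpha)g_m^2\big)\frac{\partial}{\partial z_r}\log w(z),$$ with $\mathrm{SNR}(g^r_{\alpha,M,K}(z)):=|\mathbb{E}[g^r_{\alpha,M,K}(z)]|/\sqrt{\mathbb{V}[g^r_{\alpha,M,K}(z)]}$. Assume $\mathbb{E}_{Z\sim q}[w(Z)^{4(1-\alpha)}]<\infty$ and $\mathbb{E}_{Z\sim q}[w(Z)^{-12(1-\alpha)}]<\infty$. Then for any $z$ with $w(z)>0$, $$\mathrm{SNR}(g^r_{\alpha,M,K}(z))=\Omega(\sqrt{MK}),\qquad r=1,\dots,d.$$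
   Context: For positive quantities $a$ and $b$, $a=\Omega(b)$ means there is a constant $c>0$ with $a/b\ge c$ for all $K$ sufficiently large. The estimator is the Monte Carlo estimate of the $r$-th coordinate of the Wasserstein gradient of the VR-IWAE bound, $\mathbb{E}_{z_1,\dots,z_{K-1}\overset{i.i.d.}{\sim}q}\big[(\alpha g+(1-\alpha)g^2)\nabla_z\log w(z)\big]$ with $g=w(z)^{1-\alpha}/(\sum_{j=1}^{K-1}w(z_j)^{1-\alpha}+w(z)^{1-\alpha})$. *)

theory Defs
  imports "HOL-Probability.Probability"
begin

text \<open>Importance weight w(z) = p(x,z)/q(z), with the observed data x fixed,
  so that the joint density is represented as a function of z only.\<close>
definition iw :: "('a \<Rightarrow> real) \<Rightarrow> ('a \<Rightarrow> real) \<Rightarrow> 'a \<Rightarrow> real" where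
  "iw p q y = p y / q y"

text \<open>Partial derivative of f at z in the direction of the basis vector b
  (b ranges over Basis, i.e. the coordinates r = 1..d).\<close>
definition partial_deriv :: "('a::euclidean_space \<Rightarrow> real) \<Rightarrow> 'a \<Rightarrow> 'a \<Rightarrow> real" where
  "partial_deriv f z b = frechet_derivative f (at z) b"

definition sample_space :: "('a::euclidean_space \<Rightarrow> real) \<Rightarrow> nat \<Rightarrow> nat \<Rightarrow> (nat \<times> nat \<Rightarrow> 'a) measure" where
  "sample_space q M K = PiM ({..<M} \<times> {..<K-1}) (\<lambda>_. density lborel (\<lambda>y. ennreal (q y)))"

definition gm :: "real \<Rightarrow> ('a \<Rightarrow> real) \<Rightarrow> nat \<Rightarrow> 'a \<Rightarrow> (nat \<Rightarrow> 'a) \<Rightarrow> real" where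
  "gm \<alpha> w K z \<zeta> = w z powr (1-\<alpha>) / ((\<Sum>j<K-1. w (\<zeta> j) powr (1-\<alpha>)) + w z powr (1-\<alpha>))"

text \<open>The estimator g^r_{alpha,M,K}(z); D is the partial derivative of log w at z.\<close>
definition vr_grad_est :: "real \<Rightarrow> ('a \<Rightarrow> real) \<Rightarrow> real \<Rightarrow> nat \<Rightarrow> nat \<Rightarrow> 'a \<Rightarrow> (nat \<times> nat \<Rightarrow> 'a) \<Rightarrow> real" where
  "vr_grad_est \<alpha> w D M K z \<omega> =
     (1 / real M) * (\<Sum>m<M. (\<alpha> * gm \<alpha> w K z (\<lambda>j. \<omega> (m, j)) + (1-\<alpha>) * (gm \<alpha> w K z (\<lambda>j. \<omega> (m, j)))\<^sup>2) * D)"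

text \<open>Signal-to-noise ratio |E X| / sqrt(Var X), valued in the extended reals;
  a zero variance (with nonzero mean) gives +infinity.\<close>
definition snr :: "'b measure \<Rightarrow> ('b \<Rightarrow> real) \<Rightarrow> ereal" where
  "snr P X = (let E = (\<integral>\<omega>. X \<omega> \<partial>P); V = (\<integral>\<omega>. (X \<omega> - E)\<^sup>2 \<partial>P) in
      if V = 0 then (if E = 0 then 0 else \<infinity>) else ereal (\<bar>E\<bar> / sqrt V))"

end

theory Submission
  imports Defs
begin

lemma pim_prod_integral:
  fixes h :: "'i \<Rightarrow> 'a \<Rightarrow> real"
  assumes N: "prob_space N" and fin: "finite I" and int: "\<And>i. i \<in> I \<Longrightarrow> integrable N (h i)"
  shows "(\<integral>\<omega>. (\<Prod>i\<in>I. h i (\<omega> i)) \<partial>PiM I (\<lambda>_. N)) = (\<Prod>i\<in>I. integral\<^sup>L N (h i))"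
    "integrable (PiM I (\<lambda>_. N)) (\<lambda>\<omega>. (\<Prod>i\<in>I. h i (\<omega> i)))"
proof -
  interpret prob_space N by fact
  interpret product_sigma_finite "\<lambda>_. N" by standard
  show "(\<integral>\<omega>. (\<Prod>i\<in>I. h i (\<omega> i)) \<partial>PiM I (\<lambda>_. N)) = (\<Prod>i\<in>I. integral\<^sup>L N (h i))"
    by (rule product_integral_prod[OF fin int])
  show "integrable (PiM I (\<lambda>_. N)) (\<lambda>\<omega>. (\<Prod>i\<in>I. h i (\<omega> i)))"
    by (rule product_integrable_prod[OF fin int])
qed

lemma pim_sub_prod:
  fixes h :: "'i \<Rightarrow> 'a \<Rightarrow> real"
  assumes N: "prob_space N" and fin: "finite I" and R: "R \<subseteq> I"
    and int: "\<And>i. i \<in> R \<Longrightarrow> integrable N (h i)"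
  shows "(\<integral>\<omega>. (\<Prod>i\<in>R. h i (\<omega> i)) \<partial>PiM I (\<lambda>_. N)) = (\<Prod>i\<in>R. integral\<^sup>L N (h i))"
    "integrable (PiM I (\<lambda>_. N)) (\<lambda>\<omega>. (\<Prod>i\<in>R. h i (\<omega> i)))"
proof -
  interpret prob_space N by fact
  let ?h = "\<lambda>i x. if i \<in> R then h i x else 1"
  have i: "integrable N (?h i)" if "i \<in> I" for i using int by (cases "i \<in> R") simp_all
  have e: "(\<Prod>i\<in>I. ?h i (\<omega> i)) = (\<Prod>i\<in>R. h i (\<omega> i))" for \<omega>
    using fin R by (simp add: prod.If_cases inf.absorb2)
  have ie: "integral\<^sup>L N (?h i) = (if i \<in> R then integral\<^sup>L N (h i) else 1)" for i
    by (cases "i \<in> R") (simp_all add: prob_space)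
  have p: "(\<Prod>i\<in>I. integral\<^sup>L N (?h i)) = (\<Prod>i\<in>R. integral\<^sup>L N (h i))"
    unfolding ie using fin R by (simp add: prod.If_cases inf.absorb2)
  have "(\<integral>\<omega>. (\<Prod>i\<in>I. ?h i (\<omega> i)) \<partial>PiM I (\<lambda>_. N)) = (\<Prod>i\<in>I. integral\<^sup>L N (?h i))"
    by (rule pim_prod_integral(1)[OF N fin]) (rule i)
  then show "(\<integral>\<omega>. (\<Prod>i\<in>R. h i (\<omega> i)) \<partial>PiM I (\<lambda>_. N)) = (\<Prod>i\<in>R. integral\<^sup>L N (h i))"
    by (simp only: e p)
  have "integrable (PiM I (\<lambda>_. N)) (\<lambda>\<omega>. (\<Prod>i\<in>I. ?h i (\<omega> i)))"
    by (rule pim_prod_integral(2)[OF N fin]) (rule i)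
  then show "integrable (PiM I (\<lambda>_. N)) (\<lambda>\<omega>. (\<Prod>i\<in>R. h i (\<omega> i)))"
    by (simp only: e)
qed

lemma pim_coord:
  fixes h :: "'a \<Rightarrow> real"
  assumes N: "prob_space N" and fin: "finite I" and k: "k \<in> I" and int: "integrable N h"
  shows "(\<integral>\<omega>. h (\<omega> k) \<partial>PiM I (\<lambda>_. N)) = integral\<^sup>L N h"
    "integrable (PiM I (\<lambda>_. N)) (\<lambda>\<omega>. h (\<omega> k))"
  using pim_sub_prod[OF N fin, of "{k}" "\<lambda>_. h"] k int by auto

lemma pim_pair:
  fixes h h' :: "'a \<Rightarrow> real"
  assumes N: "prob_space N" and fin: "finite I" and k: "k \<in> I" "l \<in> I" "k \<noteq> l"
    and int: "integrable N h" "integrable N h'"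
  shows "(\<integral>\<omega>. h (\<omega> k) * h' (\<omega> l) \<partial>PiM I (\<lambda>_. N)) = integral\<^sup>L N h * integral\<^sup>L N h'"
    "integrable (PiM I (\<lambda>_. N)) (\<lambda>\<omega>. h (\<omega> k) * h' (\<omega> l))"
  using pim_sub_prod[OF N fin, of "{k,l}" "\<lambda>i. if i = k then h else h'"] k int by auto

lemma pim_row_prod:
  fixes h :: "'a \<Rightarrow> real"
  assumes N: "prob_space N" and fin: "finite I" and row: "\<And>j. j < n \<Longrightarrow> (m, j) \<in> I"
    and int: "integrable N h"
  shows "(\<integral>\<omega>. (\<Prod>j<n. h (\<omega> (m, j))) \<partial>PiM I (\<lambda>_. N)) = integral\<^sup>L N h ^ n"
    "integrable (PiM I (\<lambda>_. N)) (\<lambda>\<omega>. (\<Prod>j<n. h (\<omega> (m, j))))"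
proof -
  let ?R = "(\<lambda>j. (m, j)) ` {..<n}"
  have R: "?R \<subseteq> I" using row by auto
  have inj: "inj_on (\<lambda>j. (m, j)) {..<n}" by (auto simp: inj_on_def)
  have e: "(\<Prod>i\<in>?R. h (\<omega> i)) = (\<Prod>j<n. h (\<omega> (m, j)))" for \<omega>
    by (subst prod.reindex[OF inj]) simp
  have c: "card ?R = n" using card_image[OF inj] by simp
  show "(\<integral>\<omega>. (\<Prod>j<n. h (\<omega> (m, j))) \<partial>PiM I (\<lambda>_. N)) = integral\<^sup>L N h ^ n"
    using pim_sub_prod(1)[OF N fin R, of "\<lambda>_. h"] int by (simp add: e c)
  show "integrable (PiM I (\<lambda>_. N)) (\<lambda>\<omega>. (\<Prod>j<n. h (\<omega> (m, j))))"
    using pim_sub_prod(2)[OF N fin R, of "\<lambda>_. h"] int by (simp add: e)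
qed

lemma pim_indep:
  fixes F G :: "('i \<Rightarrow> 'a) \<Rightarrow> real"
  assumes N: "prob_space N" and fin: "finite A" "finite B" and AB: "A \<inter> B = {}"
    and iF: "integrable (PiM (A \<union> B) (\<lambda>_. N)) F"
    and iG: "integrable (PiM (A \<union> B) (\<lambda>_. N)) G"
    and iFG: "integrable (PiM (A \<union> B) (\<lambda>_. N)) (\<lambda>\<omega>. F \<omega> * G \<omega>)"
    and dF: "\<And>\<omega> \<omega>'. (\<And>k. k \<in> A \<Longrightarrow> \<omega> k = \<omega>' k) \<Longrightarrow> F \<omega> = F \<omega>'"
    and dG: "\<And>\<omega> \<omega>'. (\<And>k. k \<in> B \<Longrightarrow> \<omega> k = \<omega>' k) \<Longrightarrow> G \<omega> = G \<omega>'"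
  shows "(\<integral>\<omega>. F \<omega> * G \<omega> \<partial>PiM (A \<union> B) (\<lambda>_. N)) =
     (\<integral>\<omega>. F \<omega> \<partial>PiM (A \<union> B) (\<lambda>_. N)) * (\<integral>\<omega>. G \<omega> \<partial>PiM (A \<union> B) (\<lambda>_. N))"
proof -
  interpret prob_space N by fact
  interpret product_sigma_finite "\<lambda>_. N" by standard
  interpret PA: prob_space "PiM A (\<lambda>_. N)" by (intro prob_space_PiM) (simp add: prob_space_axioms)
  interpret PB: prob_space "PiM B (\<lambda>_. N)" by (intro prob_space_PiM) (simp add: prob_space_axioms)
  define F' where "F' x = F (merge A B (x, undefined))" for x
  define G' where "G' y = G (merge A B (undefined, y))" for y
  have mF: "F (merge A B (x, y)) = F' x" for x y
    unfolding F'_def by (rule dF) (simp add: merge_def)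
  have mG: "G (merge A B (x, y)) = G' y" for x y
    unfolding G'_def using AB by (intro dG) (auto simp: merge_def)
  have "(\<integral>\<omega>. F \<omega> * G \<omega> \<partial>PiM (A \<union> B) (\<lambda>_. N)) =
      (\<integral>x. (\<integral>y. F' x * G' y \<partial>PiM B (\<lambda>_. N)) \<partial>PiM A (\<lambda>_. N))"
    using product_integral_fold[OF AB fin iFG] by (simp add: mF mG)
  also have "\<dots> = (\<integral>x. F' x \<partial>PiM A (\<lambda>_. N)) * (\<integral>y. G' y \<partial>PiM B (\<lambda>_. N))"
    by simp
  also have "(\<integral>x. F' x \<partial>PiM A (\<lambda>_. N)) = (\<integral>\<omega>. F \<omega> \<partial>PiM (A \<union> B) (\<lambda>_. N))"
    using product_integral_fold[OF AB fin iF] by (simp add: mF PB.prob_space)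
  also have "(\<integral>y. G' y \<partial>PiM B (\<lambda>_. N)) = (\<integral>\<omega>. G \<omega> \<partial>PiM (A \<union> B) (\<lambda>_. N))"
    using product_integral_fold[OF AB fin iG] by (simp add: mG PA.prob_space)
  finally show ?thesis .
qed

lemma key_pw:
  fixes \<alpha> a T s t g g0 :: real
  assumes al: "0 \<le> \<alpha>" "\<alpha> \<le> 1" and a: "a > 0" and T: "T > 0" and s: "s \<ge> 0" and t: "t > 0"
    and g: "g = a / (s + a)" and g0: "g0 = a / (a + T)"
  shows "((\<alpha> * g + (1-\<alpha>) * g\<^sup>2) - (\<alpha> * g0 + (1-\<alpha>) * g0\<^sup>2))\<^sup>2
     \<le> 36 * (\<alpha> * g0 + (1-\<alpha>) * g0\<^sup>2)\<^sup>2 * (s - T)\<^sup>2 / (a + T)\<^sup>2 + exp (t * (T/2 - s))"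
proof -
  define f0 where "f0 = \<alpha> * g0 + (1-\<alpha>) * g0\<^sup>2"
  have g0p: "0 < g0" "g0 \<le> 1" using a T by (auto simp: g0 field_simps)
  have gp: "0 < g" "g \<le> 1" using a s by (auto simp: g field_simps)
  have f0p: "0 \<le> f0" "f0 \<le> 1"
  proof -
    have "g0\<^sup>2 \<le> 1" using g0p by (simp add: power_le_one)
    then show "f0 \<le> 1" unfolding f0_def using al g0p
      by (smt (verit, best) mult_left_le mult_nonneg_nonneg)
    show "0 \<le> f0" unfolding f0_def using al g0p by simp
  qed
  have fgp: "0 \<le> \<alpha> * g + (1-\<alpha>) * g\<^sup>2" "\<alpha> * g + (1-\<alpha>) * g\<^sup>2 \<le> 1"
  proof -
    have "g\<^sup>2 \<le> 1" using gp by (simp add: power_le_one)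
    then show "\<alpha> * g + (1-\<alpha>) * g\<^sup>2 \<le> 1" using al gp
      by (smt (verit, best) mult_left_le mult_nonneg_nonneg)
    show "0 \<le> \<alpha> * g + (1-\<alpha>) * g\<^sup>2" using al gp by simp
  qed
  have ex0: "0 \<le> exp (t * (T/2 - s))" by simp
  have first0: "0 \<le> 36 * f0\<^sup>2 * (s - T)\<^sup>2 / (a + T)\<^sup>2" by simp
  show ?thesis
  proof (cases "s \<ge> T/2")
    case True
    have gle: "g \<le> 2 * g0" using mult_left_mono[of T "a + 2 * s" a] a T True s by (simp add: g g0 field_simps algebra_simps)
    have inv: "1 / (s + a) \<le> 2 / (a + T)" using a T True s by (simp add: field_simps)
    have gd: "g - g0 = g0 * (T - s) / (s + a)" using a T s by (simp add: g g0 field_simps)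
    have dif: "\<bar>g - g0\<bar> \<le> 2 * g0 * \<bar>s - T\<bar> / (a + T)"
    proof -
      have "\<bar>g - g0\<bar> = g0 * \<bar>s - T\<bar> * (1 / (s + a))"
        using gd g0p a s by (simp add: abs_div abs_mult abs_minus_commute)
      also have "\<dots> \<le> g0 * \<bar>s - T\<bar> * (2 / (a + T))"
        by (rule mult_left_mono[OF inv]) (use g0p in simp)
      finally show ?thesis by (simp add: mult.commute mult.left_commute)
    qed
    have fac: "(\<alpha> * g + (1-\<alpha>) * g\<^sup>2) - f0 = (g - g0) * (\<alpha> + (1-\<alpha>) * (g + g0))"
      unfolding f0_def by (simp add: power2_eq_square algebra_simps)
    have L0: "0 \<le> \<alpha> + (1-\<alpha>) * (g + g0)" using al gp g0p by simp
    have L1: "\<alpha> + (1-\<alpha>) * (g + g0) \<le> 3 * (\<alpha> + (1-\<alpha>) * g0)"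
    proof -
      have "(1-\<alpha>) * (g + g0) \<le> (1-\<alpha>) * (3 * g0)" using gle al by (intro mult_left_mono) auto
      moreover have "(1-\<alpha>) * (3 * g0) = 3 * ((1-\<alpha>) * g0)" by simp
      moreover have "3 * (\<alpha> + (1-\<alpha>) * g0) = 3 * \<alpha> + 3 * ((1-\<alpha>) * g0)" by (rule distrib_left)
      ultimately show ?thesis using al by linarith
    qed
    have f0e: "f0 = g0 * (\<alpha> + (1-\<alpha>) * g0)" unfolding f0_def by (simp add: power2_eq_square algebra_simps)
    have "\<bar>(\<alpha> * g + (1-\<alpha>) * g\<^sup>2) - f0\<bar> = \<bar>g - g0\<bar> * (\<alpha> + (1-\<alpha>) * (g + g0))"
      using fac L0 by (simp add: abs_mult)
    also have "\<dots> \<le> (2 * g0 * \<bar>s - T\<bar> / (a + T)) * (3 * (\<alpha> + (1-\<alpha>) * g0))"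
      by (rule mult_mono[OF dif L1]) (use g0p a T L0 in auto)
    also have "\<dots> = 6 * f0 * \<bar>s - T\<bar> / (a + T)" by (simp add: f0e)
    finally have b: "\<bar>(\<alpha> * g + (1-\<alpha>) * g\<^sup>2) - f0\<bar> \<le> 6 * f0 * \<bar>s - T\<bar> / (a + T)" .
    have "((\<alpha> * g + (1-\<alpha>) * g\<^sup>2) - f0)\<^sup>2 = \<bar>(\<alpha> * g + (1-\<alpha>) * g\<^sup>2) - f0\<bar>\<^sup>2" by simp
    also have "\<dots> \<le> (6 * f0 * \<bar>s - T\<bar> / (a + T))\<^sup>2" by (rule power_mono[OF b]) simp
    also have "\<dots> = 36 * f0\<^sup>2 * (s - T)\<^sup>2 / (a + T)\<^sup>2" by (simp add: power_mult_distrib power_divide)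
    finally show ?thesis using ex0 unfolding f0_def by linarith
  next
    case False
    have "((\<alpha> * g + (1-\<alpha>) * g\<^sup>2) - f0)\<^sup>2 \<le> 1"
      using fgp f0p by (simp add: abs_le_iff power_le_one_iff abs_square_le_1)
    moreover have "1 \<le> exp (t * (T/2 - s))" using False t by simp
    ultimately show ?thesis using first0 unfolding f0_def by linarith
  qed
qed

lemma exp_neg_le: fixes x :: real assumes "0 \<le> x" shows "exp (-x) \<le> 1 - x + x\<^sup>2/2"
proof -
  have l: "1 + x + x\<^sup>2/2 \<le> exp x" by (rule exp_lower_Taylor_quadratic[OF assms])
  have p: "0 < 1 + x + x\<^sup>2/2" using assms by (simp add: add_pos_nonneg)
  have "(1 - x + x\<^sup>2/2) * (1 + x + x\<^sup>2/2) = 1 + x^4/4" by (simp add: power2_eq_square power4_eq_xxxx algebra_simps)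
  then have q: "1 \<le> (1 - x + x\<^sup>2/2) * (1 + x + x\<^sup>2/2)" by simp
  have "exp (-x) = 1 / exp x" by (simp add: exp_minus field_simps)
  also have "\<dots> \<le> 1 / (1 + x + x\<^sup>2/2)" using l p by (simp add: frac_le)
  also have "\<dots> \<le> 1 - x + x\<^sup>2/2" using q p by (simp add: field_simps)
  finally show ?thesis .
qed

lemma poly_exp_bound: fixes k :: real and n :: nat assumes "k > 0" "n \<ge> 1"
  shows "real (n+1) ^ 5 * exp (- k * n) \<le> 32 * 6^6 / k^6"
proof -
  have e1: "1 + k * n / 6 \<le> exp (k * n / 6)" by (rule exp_ge_add_one_self)
  have e0: "k * n / 6 \<le> 1 + k * n / 6" by simp
  have "(k * n / 6) ^ 6 \<le> exp (k * n / 6) ^ 6"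
    by (rule power_mono) (use order_trans[OF e0 e1] assms in auto)
  also have "\<dots> = exp (k * n)" by (simp add: exp_of_nat_mult[symmetric])
  finally have E: "(k * n / 6) ^ 6 \<le> exp (k * n)" .
  have n1: "real (n+1) \<le> 2 * n" using assms by simp
  have "real (n+1) ^ 5 \<le> (2 * real n) ^ 5" using power_mono[OF n1, of 5] by simp
  then have P: "real (n+1) ^ 5 \<le> 32 * real n ^ 5" by (simp add: power_mult_distrib)
  have npos: "real n > 0" using assms by simp
  have "real (n+1) ^ 5 * exp (- k * n) = real (n+1) ^ 5 / exp (k * n)" by (simp add: exp_minus field_simps)
  also have "\<dots> \<le> 32 * real n ^ 5 / (k * n / 6) ^ 6"
    by (rule frac_le) (use P E npos assms in auto)
  also have "\<dots> = 32 * 6^6 / (k^6 * n)"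
  proof -
    have "real n ^ 6 = real n ^ 5 * real n" by (simp add: power_Suc2[symmetric] del: power_Suc)
    then show ?thesis using npos assms by (simp add: power_divide power_mult_distrib field_simps)
  qed
  also have "\<dots> \<le> 32 * 6^6 / k^6" using npos assms by (simp add: field_simps)
  finally show ?thesis .
qed

lemma tangent_alg:
  fixes a P Q :: real assumes "P \<noteq> 0" "Q \<noteq> 0"
  shows "a/P - a/Q + a*(P-Q)/Q\<^sup>2 = a*(P-Q)\<^sup>2/(P*Q\<^sup>2)"
  using assms by (simp add: field_simps power2_eq_square)

lemma tangent_pw:
  fixes \<alpha> a T s :: real
  assumes al: "0 \<le> \<alpha>" "\<alpha> \<le> 1" and a: "a > 0" and T: "T \<ge> 0" and s: "s \<ge> 0"
  shows "\<alpha> * (a/(s+a)) + (1-\<alpha>) * (a/(s+a))\<^sup>2 \<ge>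
     (\<alpha> * (a/(a+T)) + (1-\<alpha>) * (a/(a+T))\<^sup>2) - (\<alpha> + 2*(1-\<alpha>)*(a/(a+T))) * a / (a+T)\<^sup>2 * (s - T)"
proof -
  define g where "g = a/(s+a)"
  define g0 where "g0 = a/(a+T)"
  have g0p: "0 < g0" using a T by (simp add: g0_def)
  have d: "g - g0 + a * (s - T) / (a+T)\<^sup>2 = a * (s-T)\<^sup>2 / ((s+a) * (a+T)\<^sup>2)"
  proof -
    have ne: "s + a \<noteq> 0" "a + T \<noteq> 0" using a T s by auto
    have "s - T = (s + a) - (a + T)" by simp
    then show ?thesis unfolding g_def g0_def using tangent_alg[OF ne, of a] by simp
  qed
  have "0 \<le> a * (s-T)\<^sup>2 / ((s+a) * (a+T)\<^sup>2)" using a s by simp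
  then have gg: "g - g0 \<ge> - (a * (s - T) / (a+T)\<^sup>2)" using d by linarith
  have sq: "g\<^sup>2 \<ge> g0\<^sup>2 + 2 * g0 * (g - g0)"
  proof -
    have "0 \<le> (g - g0)\<^sup>2" by simp
    then show ?thesis by (simp add: power2_eq_square algebra_simps)
  qed
  have c0: "0 \<le> \<alpha> + 2*(1-\<alpha>)*g0" using al g0p by simp
  have E: "(\<alpha> * g + (1-\<alpha>) * g\<^sup>2) - (\<alpha> * g0 + (1-\<alpha>) * g0\<^sup>2) = \<alpha> * (g - g0) + (1-\<alpha>) * (g\<^sup>2 - g0\<^sup>2)"
    by (simp add: algebra_simps)
  have A: "(1-\<alpha>) * (2 * g0 * (g - g0)) \<le> (1-\<alpha>) * (g\<^sup>2 - g0\<^sup>2)"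
    using sq al by (intro mult_left_mono) auto
  have B: "\<alpha> * (g - g0) + (1-\<alpha>) * (2 * g0 * (g - g0)) = (\<alpha> + 2*(1-\<alpha>)*g0) * (g - g0)"
    by (simp add: algebra_simps)
  have C: "(\<alpha> + 2*(1-\<alpha>)*g0) * (- (a * (s - T) / (a+T)\<^sup>2)) \<le> (\<alpha> + 2*(1-\<alpha>)*g0) * (g - g0)"
    by (rule mult_left_mono[OF gg c0])
  have F: "(\<alpha> + 2*(1-\<alpha>)*g0) * (- (a * (s - T) / (a+T)\<^sup>2)) = - ((\<alpha> + 2*(1-\<alpha>)*g0) * a / (a+T)\<^sup>2 * (s - T))"
    by simp
  have "(\<alpha> * g + (1-\<alpha>) * g\<^sup>2) \<ge> (\<alpha> * g0 + (1-\<alpha>) * g0\<^sup>2) - (\<alpha> + 2*(1-\<alpha>)*g0) * a / (a+T)\<^sup>2 * (s - T)"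
    using E A B C F by linarith
  then show ?thesis by (simp add: g_def g0_def)
qed

lemma f0_lower:
  fixes \<alpha> a \<mu> :: real and n :: nat
  assumes al: "0 \<le> \<alpha>" "\<alpha> \<le> 1" and a: "a > 0" and mu: "\<mu> > 0"
  shows "a^4 / ((a+\<mu>)^4 * (real n + 1)^4) \<le> (\<alpha> * (a/(a+n*\<mu>)) + (1-\<alpha>) * (a/(a+n*\<mu>))\<^sup>2)\<^sup>2"
proof -
  define g0 where "g0 = a/(a+n*\<mu>)"
  have nm: "0 \<le> real n * \<mu>" using mu by simp
  have g0p: "0 < g0" "g0 \<le> 1" using a nm by (auto simp: g0_def field_simps)
  have "g0\<^sup>2 \<le> g0" using g0p by (simp add: power2_eq_square mult_left_le)
  then have "\<alpha> * g0\<^sup>2 \<le> \<alpha> * g0" using al by (intro mult_left_mono) auto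
  moreover have "(1-\<alpha>) * g0\<^sup>2 = g0\<^sup>2 - \<alpha> * g0\<^sup>2" by (simp add: algebra_simps)
  ultimately have h: "g0\<^sup>2 \<le> \<alpha> * g0 + (1-\<alpha>) * g0\<^sup>2" by linarith
  have lb: "a / ((a+\<mu>) * (real n + 1)) \<le> g0"
    unfolding g0_def using a mu
    by (intro divide_left_mono) (auto simp: algebra_simps intro!: mult_pos_pos add_pos_nonneg)
  have lb0: "0 \<le> a / ((a+\<mu>) * (real n + 1))" using a mu by simp
  have "a^4 / ((a+\<mu>)^4 * (real n + 1)^4) = (a / ((a+\<mu>) * (real n + 1)))^4"
    by (simp add: power_divide power_mult_distrib)
  also have "\<dots> \<le> g0^4" by (rule power_mono[OF lb lb0])
  also have "\<dots> = (g0\<^sup>2)\<^sup>2" by simp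
  also have "\<dots> \<le> (\<alpha> * g0 + (1-\<alpha>) * g0\<^sup>2)\<^sup>2"
    by (rule power_mono[OF h]) simp
  finally show ?thesis by (simp add: g0_def)
qed

lemma first_term:
  fixes a \<mu> :: real and n :: nat
  assumes a: "a > 0" and mu: "\<mu> > 0" and n: "n \<ge> 1"
  shows "real n / (a + n*\<mu>)\<^sup>2 \<le> 2 / (\<mu>\<^sup>2 * (real n + 1))"
proof -
  have np: "real n > 0" using n by simp
  have nn: "real n * 1 \<le> real n * real n" using n by (intro mult_left_mono) auto
  have h: "real n * (real n + 1) \<le> 2 * (real n)\<^sup>2" using nn by (simp add: power2_eq_square algebra_simps)
  have "real n * (real n + 1) * \<mu>\<^sup>2 \<le> 2 * (real n)\<^sup>2 * \<mu>\<^sup>2"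
    by (rule mult_right_mono[OF h]) simp
  also have "\<dots> = 2 * (real n * \<mu>)\<^sup>2" by (simp add: power_mult_distrib)
  finally have "real n * (real n + 1) * \<mu>\<^sup>2 \<le> 2 * (real n * \<mu>)\<^sup>2" .
  also have "\<dots> \<le> 2 * (a + n*\<mu>)\<^sup>2"
    using a mu np by (intro mult_left_mono power_mono) auto
  finally have "real n * (real n + 1) * \<mu>\<^sup>2 \<le> 2 * (a + n*\<mu>)\<^sup>2" .
  moreover have "0 < a + \<mu> * real n" "0 < a + real n * \<mu>" using a mu np by (simp_all add: add_pos_pos)
  ultimately have H: "real n * (\<mu>\<^sup>2 * (real n + 1)) \<le> 2 * (a + n*\<mu>)\<^sup>2" by (simp add: algebra_simps)
  have "0 < a + n*\<mu>" using a mu np by (simp add: add_pos_pos)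
  then have p1: "0 < (a + n*\<mu>)\<^sup>2" by simp
  have p2: "0 < \<mu>\<^sup>2 * (real n + 1)" using mu by simp
  have "real n \<le> 2 * (a + n*\<mu>)\<^sup>2 / (\<mu>\<^sup>2 * (real n + 1))"
    using H p2 by (simp add: pos_le_divide_eq)
  then have "real n \<le> 2 / (\<mu>\<^sup>2 * (real n + 1)) * (a + n*\<mu>)\<^sup>2" by simp
  then show ?thesis using p1 by (simp add: pos_divide_le_eq)
qed

lemma alg5: fixes B b c k :: real assumes "b > 0" "c > 0" "k > 0"
  shows "B / k^5 = (B * c^4 / b^4 / k) * (b^4 / (c^4 * k^4))"
proof -
  have "k^5 = k * k^4" by (simp add: power_Suc[symmetric] del: power_Suc)
  then show ?thesis using assms by (simp add: field_simps)
qed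


lemma alg6: fixes M k D C f :: real assumes "M \<noteq> 0" "k \<noteq> 0"
  shows "M * ((D / M)\<^sup>2 * (C * f\<^sup>2 / k)) = D\<^sup>2 * C * f\<^sup>2 / (M * k)"
  using assms by (simp add: field_simps power2_eq_square)

lemma snr_alg: fixes D f0 C0 Mn V E :: real
  assumes D: "D \<noteq> 0" and f0: "f0 > 0" and C0: "C0 > 0" and Mn: "Mn > 0" and V: "0 < V" "V \<le> D\<^sup>2 * C0 * f0\<^sup>2 / Mn"
    and E: "\<bar>E\<bar> \<ge> \<bar>D\<bar> * f0"
  shows "1 / sqrt C0 * sqrt Mn \<le> \<bar>E\<bar> / sqrt V"
proof -
  define Vb where "Vb = D\<^sup>2 * C0 * f0\<^sup>2 / Mn"
  have "Vb = (\<bar>D\<bar> * f0)\<^sup>2 * (C0 / Mn)" by (simp add: Vb_def power_mult_distrib)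
  then have sVb: "sqrt Vb = (\<bar>D\<bar> * f0) * (sqrt C0 / sqrt Mn)"
    using f0 by (simp add: real_sqrt_mult real_sqrt_divide)
  have p: "0 < \<bar>D\<bar> * f0" using D f0 by simp
  have "1 / sqrt C0 * sqrt Mn = (\<bar>D\<bar> * f0) / sqrt Vb"
    unfolding sVb using p C0 Mn D f0 by (simp add: field_simps)
  also have "\<dots> \<le> (\<bar>D\<bar> * f0) / sqrt V"
    using V p by (intro divide_left_mono) (auto simp: Vb_def)
  also have "\<dots> \<le> \<bar>E\<bar> / sqrt V"
    using E V by (intro divide_right_mono) auto
  finally show ?thesis .
qed

locale setting =
  fixes N :: "'a measure" and Y :: "'a \<Rightarrow> real" and \<alpha> a :: real
  assumes N: "prob_space N"
    and Ym[measurable]: "Y \<in> borel_measurable N"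
    and Ynn: "\<And>y. 0 \<le> Y y"
    and iY: "integrable N Y"
    and iY2: "integrable N (\<lambda>y. (Y y)\<^sup>2)"
    and mupos: "integral\<^sup>L N Y > 0"
    and al: "0 \<le> \<alpha>" "\<alpha> \<le> 1"
    and apos: "a > 0"
begin

interpretation NP: prob_space N by (rule N)

definition "\<mu> = integral\<^sup>L N Y"
definition "m2 = integral\<^sup>L N (\<lambda>y. (Y y)\<^sup>2)"
definition "\<sigma>2 = integral\<^sup>L N (\<lambda>y. (Y y - \<mu>)\<^sup>2)"
definition "f x = \<alpha> * x + (1-\<alpha>) * x\<^sup>2"
definition "S \<omega> m n = (\<Sum>j<n. Y (\<omega> (m, j)))"

lemma iYc: "integrable N (\<lambda>y. Y y - \<mu>)" using iY by simp

lemma iYc2: "integrable N (\<lambda>y. (Y y - \<mu>)\<^sup>2)"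
proof -
  have "(\<lambda>y. (Y y - \<mu>)\<^sup>2) = (\<lambda>y. (Y y)\<^sup>2 - 2 * \<mu> * Y y + \<mu>\<^sup>2)"
    by (simp add: power2_diff field_simps)
  then show ?thesis using iY iY2 by simp
qed

lemma Yc_int: "integral\<^sup>L N (\<lambda>y. Y y - \<mu>) = 0"
  using iY by (simp add: \<mu>_def NP.prob_space)

lemma var_id: "\<sigma>2 = m2 - \<mu>\<^sup>2"
proof -
  have "(\<lambda>y. (Y y - \<mu>)\<^sup>2) = (\<lambda>y. (Y y)\<^sup>2 - 2 * \<mu> * Y y + \<mu>\<^sup>2)"
    by (simp add: power2_diff field_simps)
  then have "\<sigma>2 = integral\<^sup>L N (\<lambda>y. (Y y)\<^sup>2 - 2 * \<mu> * Y y + \<mu>\<^sup>2)" by (simp add: \<sigma>2_def)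
  also have "\<dots> = m2 - 2 * \<mu> * \<mu> + \<mu>\<^sup>2"
    using iY iY2 by (simp add: m2_def \<mu>_def NP.prob_space)
  finally show ?thesis by (simp add: power2_eq_square)
qed

lemma \<sigma>2_nn: "0 \<le> \<sigma>2" unfolding \<sigma>2_def by simp

lemma m2_pos: "m2 > 0"
proof -
  have "\<mu>\<^sup>2 > 0" using mupos by (simp add: \<mu>_def)
  then show ?thesis using var_id \<sigma>2_nn by linarith
qed

definition "t0 = \<mu> / (2 * m2)"
definition "\<kappa> = \<mu>\<^sup>2 / (8 * m2)"
definition "\<phi>0 = integral\<^sup>L N (\<lambda>y. exp (- t0 * Y y))"
definition "Bc = 32 * 6^6 / \<kappa>^6"
definition "C0 = 72 * \<sigma>2 / \<mu>\<^sup>2 + Bc * (a + \<mu>)^4 / a^4"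

lemma mu_pos: "\<mu> > 0" using mupos by (simp add: \<mu>_def)
lemma t0_pos: "t0 > 0" using mu_pos m2_pos by (simp add: t0_def)
lemma kappa_pos: "\<kappa> > 0" using mu_pos m2_pos by (simp add: \<kappa>_def)
lemma C0_pos: "C0 > 0"
proof -
  have "0 \<le> 72 * \<sigma>2 / \<mu>\<^sup>2" using \<sigma>2_nn by simp
  moreover have "0 < Bc * (a + \<mu>)^4 / a^4" using kappa_pos apos mu_pos by (simp add: Bc_def)
  ultimately show ?thesis by (simp add: C0_def)
qed

lemma iexp: assumes "t \<ge> 0" shows "integrable N (\<lambda>y. exp (- t * Y y))"
  by (rule NP.integrable_const_bound[where B=1]) (use assms Ynn in \<open>auto simp: mult_nonneg_nonneg\<close>)

lemma phi_bound: "0 \<le> \<phi>0" "exp (t0 * \<mu> / 2) * \<phi>0 \<le> exp (- \<kappa>)"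
proof -
  show "0 \<le> \<phi>0" unfolding \<phi>0_def by simp
  have i2: "integrable N (\<lambda>y. 1 - t0 * Y y + (t0 * Y y)\<^sup>2 / 2)"
    using iY iY2 by (simp add: power_mult_distrib)
  have "\<phi>0 \<le> integral\<^sup>L N (\<lambda>y. 1 - t0 * Y y + (t0 * Y y)\<^sup>2 / 2)"
    unfolding \<phi>0_def
    by (rule integral_mono[OF iexp i2]) (use t0_pos Ynn exp_neg_le in \<open>auto\<close>)
  also have "\<dots> = 1 - t0 * \<mu> + t0\<^sup>2 * m2 / 2"
    using iY iY2 by (simp add: power_mult_distrib \<mu>_def m2_def NP.prob_space)
  also have "\<dots> \<le> exp (- t0 * \<mu> + t0\<^sup>2 * m2 / 2)"
  proof -
    have "1 + (- t0 * \<mu> + t0\<^sup>2 * m2 / 2) \<le> exp (- t0 * \<mu> + t0\<^sup>2 * m2 / 2)"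
      by (rule exp_ge_add_one_self)
    then show ?thesis by linarith
  qed
  finally have "exp (t0 * \<mu> / 2) * \<phi>0 \<le> exp (t0 * \<mu> / 2) * exp (- t0 * \<mu> + t0\<^sup>2 * m2 / 2)"
    by simp
  also have "\<dots> = exp (- \<kappa>)"
  proof -
    have "t0 * \<mu> / 2 + (- t0 * \<mu> + t0\<^sup>2 * m2 / 2) = - \<kappa>"
      using m2_pos by (simp add: t0_def \<kappa>_def power2_eq_square field_simps)
    then show ?thesis by (simp only: mult_exp_exp)
  qed
  finally show "exp (t0 * \<mu> / 2) * \<phi>0 \<le> exp (- \<kappa>)" .
qed

lemma f_bnd: assumes "s \<ge> 0" shows "0 \<le> f (a/(s+a))" "f (a/(s+a)) \<le> 1"
proof -
  have g: "0 < a/(s+a)" "a/(s+a) \<le> 1" using assms apos by (auto simp: field_simps)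
  have "(a/(s+a))\<^sup>2 \<le> 1" using g by (simp add: power_le_one)
  then show "f (a/(s+a)) \<le> 1" using al g unfolding f_def
    by (smt (verit, best) mult_left_le mult_nonneg_nonneg)
  show "0 \<le> f (a/(s+a))" using al g unfolding f_def by (intro add_nonneg_nonneg mult_nonneg_nonneg) auto
qed

lemma S_nn: "0 \<le> S \<omega> m n" unfolding S_def by (simp add: sum_nonneg Ynn)

context
  fixes I :: "(nat \<times> nat) set" and m n :: nat
  assumes fin: "finite I" and row: "\<And>j. j < n \<Longrightarrow> (m, j) \<in> I"
begin

lemma S_int: "integrable (PiM I (\<lambda>_. N)) (\<lambda>\<omega>. S \<omega> m n)"
  "(\<integral>\<omega>. S \<omega> m n \<partial>PiM I (\<lambda>_. N)) = real n * \<mu>"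
proof -
  have i: "integrable (PiM I (\<lambda>_. N)) (\<lambda>\<omega>. Y (\<omega> (m, j)))" if "j < n" for j
    by (rule pim_coord(2)[OF N fin row[OF that] iY])
  show "integrable (PiM I (\<lambda>_. N)) (\<lambda>\<omega>. S \<omega> m n)"
    unfolding S_def using i by auto
  have "(\<integral>\<omega>. S \<omega> m n \<partial>PiM I (\<lambda>_. N)) = (\<Sum>j<n. \<integral>\<omega>. Y (\<omega> (m, j)) \<partial>PiM I (\<lambda>_. N))"
    unfolding S_def by (rule Bochner_Integration.integral_sum) (use i in auto)
  also have "\<dots> = (\<Sum>j<n. \<mu>)"
    using pim_coord(1)[OF N fin row iY] by (simp add: \<mu>_def)
  finally show "(\<integral>\<omega>. S \<omega> m n \<partial>PiM I (\<lambda>_. N)) = real n * \<mu>" by simp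
qed

lemma S_meas[measurable]: "(\<lambda>\<omega>. S \<omega> m n) \<in> borel_measurable (PiM I (\<lambda>_. N))"
  using S_int(1) by (rule borel_measurable_integrable)

lemma S_var: "integrable (PiM I (\<lambda>_. N)) (\<lambda>\<omega>. (S \<omega> m n - real n * \<mu>)\<^sup>2)"
  "(\<integral>\<omega>. (S \<omega> m n - real n * \<mu>)\<^sup>2 \<partial>PiM I (\<lambda>_. N)) = real n * \<sigma>2"
proof -
  define Z where "Z \<omega> j = Y (\<omega> (m, j)) - \<mu>" for \<omega> :: "nat \<times> nat \<Rightarrow> 'a" and j :: nat
  have e: "(S \<omega> m n - real n * \<mu>)\<^sup>2 = (\<Sum>i<n. \<Sum>j<n. Z \<omega> i * Z \<omega> j)" for \<omega>
  proof -
    have "S \<omega> m n - real n * \<mu> = (\<Sum>j<n. Z \<omega> j)"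
      unfolding S_def Z_def by (simp add: sum_subtractf)
    then show ?thesis by (simp add: power2_eq_square sum_product)
  qed
  have ij: "integrable (PiM I (\<lambda>_. N)) (\<lambda>\<omega>. Z \<omega> i * Z \<omega> j) \<and>
      (\<integral>\<omega>. Z \<omega> i * Z \<omega> j \<partial>PiM I (\<lambda>_. N)) = (if i = j then \<sigma>2 else 0)" if "i < n" "j < n" for i j
  proof (cases "i = j")
    case True
    have eq: "Z \<omega> i * Z \<omega> j = (Y (\<omega> (m, i)) - \<mu>)\<^sup>2" for \<omega>
      using True by (simp add: Z_def power2_eq_square)
    show ?thesis using pim_coord[OF N fin row[OF that(1)] iYc2] True
      by (simp add: Z_def power2_eq_square \<sigma>2_def)
  next
    case False
    have "(m, i) \<noteq> (m, j)" using False by simp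
    from pim_pair[OF N fin row[OF that(1)] row[OF that(2)] this iYc iYc] False show ?thesis
      by (simp add: Z_def Yc_int)
  qed
  have ii: "integrable (PiM I (\<lambda>_. N)) (\<lambda>\<omega>. \<Sum>j<n. Z \<omega> i * Z \<omega> j)" if "i < n" for i
    using ij that by (intro Bochner_Integration.integrable_sum) auto
  show "integrable (PiM I (\<lambda>_. N)) (\<lambda>\<omega>. (S \<omega> m n - real n * \<mu>)\<^sup>2)"
    unfolding e using ii by (rule Bochner_Integration.integrable_sum) auto
  have "(\<integral>\<omega>. (S \<omega> m n - real n * \<mu>)\<^sup>2 \<partial>PiM I (\<lambda>_. N)) =
      (\<Sum>i<n. \<Sum>j<n. \<integral>\<omega>. Z \<omega> i * Z \<omega> j \<partial>PiM I (\<lambda>_. N))"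
    unfolding e using ij ii by (simp add: Bochner_Integration.integral_sum)
  also have "\<dots> = (\<Sum>i<n. \<Sum>j<n. if i = j then \<sigma>2 else 0)"
    using ij by (intro sum.cong refl) auto
  also have "\<dots> = real n * \<sigma>2" by simp
  finally show "(\<integral>\<omega>. (S \<omega> m n - real n * \<mu>)\<^sup>2 \<partial>PiM I (\<lambda>_. N)) = real n * \<sigma>2" .
qed

lemma PPprob: "prob_space (PiM I (\<lambda>_. N))" by (rule prob_space_PiM) (simp add: N)

lemma F_meas[measurable]: "(\<lambda>\<omega>. f (a / (S \<omega> m n + a))) \<in> borel_measurable (PiM I (\<lambda>_. N))"
  unfolding f_def by measurable

lemma F_int: "integrable (PiM I (\<lambda>_. N)) (\<lambda>\<omega>. f (a / (S \<omega> m n + a)))"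
proof -
  interpret PP: prob_space "PiM I (\<lambda>_. N)" by (rule PPprob)
  have b: "\<bar>f (a / (S x m n + a))\<bar> \<le> 1" for x
    using f_bnd(1)[OF S_nn[of x m n]] f_bnd(2)[OF S_nn[of x m n]] by simp
  show ?thesis by (rule PP.integrable_const_bound[where B=1]) (use b in auto)
qed

lemma L4: "(\<integral>\<omega>. f (a / (S \<omega> m n + a)) \<partial>PiM I (\<lambda>_. N)) \<ge> f (a / (a + real n * \<mu>))"
proof -
  interpret PP: prob_space "PiM I (\<lambda>_. N)" by (rule PPprob)
  define T where "T = real n * \<mu>"
  define c where "c = (\<alpha> + 2*(1-\<alpha>)*(a/(a+T))) * a / (a+T)\<^sup>2"
  have T0: "0 \<le> T" using mu_pos by (simp add: T_def)
  have pw: "f (a/(a+T)) - c * (S \<omega> m n - T) \<le> f (a / (S \<omega> m n + a))" for \<omega>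
    using tangent_pw[OF al apos T0 S_nn, of \<omega> m n] unfolding f_def c_def by simp
  have il: "integrable (PiM I (\<lambda>_. N)) (\<lambda>\<omega>. f (a/(a+T)) - c * (S \<omega> m n - T))"
    using S_int(1) by simp
  have "(\<integral>\<omega>. f (a/(a+T)) - c * (S \<omega> m n - T) \<partial>PiM I (\<lambda>_. N)) = f (a/(a+T))"
    using S_int PP.prob_space by (simp add: T_def)
  moreover have "(\<integral>\<omega>. f (a/(a+T)) - c * (S \<omega> m n - T) \<partial>PiM I (\<lambda>_. N))
      \<le> (\<integral>\<omega>. f (a / (S \<omega> m n + a)) \<partial>PiM I (\<lambda>_. N))"
    by (rule integral_mono[OF il F_int]) (rule pw)
  ultimately show ?thesis by (simp add: T_def)
qed

lemma S_exp: assumes t: "t \<ge> 0"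
  shows "integrable (PiM I (\<lambda>_. N)) (\<lambda>\<omega>. exp (- t * S \<omega> m n))"
    "(\<integral>\<omega>. exp (- t * S \<omega> m n) \<partial>PiM I (\<lambda>_. N)) = (integral\<^sup>L N (\<lambda>y. exp (- t * Y y))) ^ n"
proof -
  have ie: "integrable N (\<lambda>y. exp (- t * Y y))"
    by (rule NP.integrable_const_bound[where B=1]) (use t Ynn in \<open>auto simp: mult_nonneg_nonneg\<close>)
  have e: "exp (- t * S \<omega> m n) = (\<Prod>j<n. exp (- t * Y (\<omega> (m, j))))" for \<omega>
    unfolding S_def by (simp add: sum_distrib_left exp_sum)
  show "integrable (PiM I (\<lambda>_. N)) (\<lambda>\<omega>. exp (- t * S \<omega> m n))"
    unfolding e by (rule pim_row_prod(2)[OF N fin row ie])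
  show "(\<integral>\<omega>. exp (- t * S \<omega> m n) \<partial>PiM I (\<lambda>_. N)) = (integral\<^sup>L N (\<lambda>y. exp (- t * Y y))) ^ n"
    unfolding e by (rule pim_row_prod(1)[OF N fin row ie])
qed


lemma L5: assumes n: "n \<ge> 1"
  shows "(\<integral>\<omega>. (f (a / (S \<omega> m n + a)) - f (a / (a + real n * \<mu>)))\<^sup>2 \<partial>PiM I (\<lambda>_. N))
     \<le> C0 * (f (a / (a + real n * \<mu>)))\<^sup>2 / (real n + 1)"
    "integrable (PiM I (\<lambda>_. N)) (\<lambda>\<omega>. (f (a / (S \<omega> m n + a)) - f (a / (a + real n * \<mu>)))\<^sup>2)"
proof -
  interpret PP: prob_space "PiM I (\<lambda>_. N)" by (rule PPprob)
  define T where "T = real n * \<mu>"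
  define f0 where "f0 = f (a / (a + T))"
  have Tp: "T > 0" using n mu_pos by (simp add: T_def)
  have ee: "exp (t0 * (T/2 - s)) = exp (t0*T/2) * exp (- t0 * s)" for s
    by (simp add: mult_exp_exp algebra_simps)
  have pw: "(f (a / (S \<omega> m n + a)) - f0)\<^sup>2 \<le>
      36 * f0\<^sup>2 / (a+T)\<^sup>2 * (S \<omega> m n - T)\<^sup>2 + exp (t0*T/2) * exp (- t0 * S \<omega> m n)" for \<omega>
    using key_pw[OF al apos Tp S_nn[of \<omega> m n] t0_pos refl refl] unfolding f_def f0_def ee
    by (simp add: add.commute)
  have bb: "\<bar>(f (a / (S x m n + a)) - f0)\<^sup>2\<bar> \<le> 1" for x
  proof -
    have "0 \<le> f0" "f0 \<le> 1" using f_bnd[of T] Tp by (auto simp: f0_def add.commute)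
    moreover have "0 \<le> f (a / (S x m n + a))" "f (a / (S x m n + a)) \<le> 1"
      using f_bnd(1)[OF S_nn[of x m n]] f_bnd(2)[OF S_nn[of x m n]] by auto
    ultimately have "\<bar>f (a / (S x m n + a)) - f0\<bar> \<le> 1" by linarith
    then have "\<bar>f (a / (S x m n + a)) - f0\<bar>\<^sup>2 \<le> 1" by (simp add: power_le_one abs_square_le_1)
    then show ?thesis by simp
  qed
  show il: "integrable (PiM I (\<lambda>_. N)) (\<lambda>\<omega>. (f (a / (S \<omega> m n + a)) - f (a / (a + real n * \<mu>)))\<^sup>2)"
    unfolding T_def[symmetric] f0_def[symmetric]
    by (rule PP.integrable_const_bound[where B=1]) (use bb in auto)
  have ir: "integrable (PiM I (\<lambda>_. N)) (\<lambda>\<omega>. 36 * f0\<^sup>2 / (a+T)\<^sup>2 * (S \<omega> m n - T)\<^sup>2 + exp (t0*T/2) * exp (- t0 * S \<omega> m n))"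
    using S_var(1) S_exp(1)[of t0] t0_pos unfolding T_def by simp
  have "(\<integral>\<omega>. (f (a / (S \<omega> m n + a)) - f0)\<^sup>2 \<partial>PiM I (\<lambda>_. N)) \<le>
      (\<integral>\<omega>. 36 * f0\<^sup>2 / (a+T)\<^sup>2 * (S \<omega> m n - T)\<^sup>2 + exp (t0*T/2) * exp (- t0 * S \<omega> m n) \<partial>PiM I (\<lambda>_. N))"
    by (rule integral_mono[OF il[unfolded T_def[symmetric] f0_def[symmetric]] ir]) (rule pw)
  also have "\<dots> = 36 * f0\<^sup>2 / (a+T)\<^sup>2 * (real n * \<sigma>2) + exp (t0*T/2) * \<phi>0 ^ n"
    using S_var S_exp[of t0] t0_pos unfolding T_def \<phi>0_def by simp
  also have "36 * f0\<^sup>2 / (a+T)\<^sup>2 * (real n * \<sigma>2) \<le> 72 * \<sigma>2 / \<mu>\<^sup>2 * f0\<^sup>2 / (real n + 1)"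
  proof -
    have "36 * f0\<^sup>2 / (a+T)\<^sup>2 * (real n * \<sigma>2) = (36 * f0\<^sup>2 * \<sigma>2) * (real n / (a+T)\<^sup>2)" by simp
    also have "\<dots> \<le> (36 * f0\<^sup>2 * \<sigma>2) * (2 / (\<mu>\<^sup>2 * (real n + 1)))"
      by (rule mult_left_mono) (use first_term[OF apos mu_pos n] \<sigma>2_nn in \<open>auto simp: T_def\<close>)
    also have "\<dots> = 72 * \<sigma>2 / \<mu>\<^sup>2 * f0\<^sup>2 / (real n + 1)" by simp
    finally show ?thesis .
  qed
  also have "exp (t0*T/2) * \<phi>0 ^ n \<le> Bc * (a + \<mu>)^4 / a^4 * f0\<^sup>2 / (real n + 1)"
  proof -
    have "exp (t0*T/2) = exp (t0 * \<mu> / 2) ^ n"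
      unfolding T_def exp_of_nat_mult[symmetric] by (simp add: algebra_simps)
    then have "exp (t0*T/2) * \<phi>0 ^ n = (exp (t0 * \<mu> / 2) * \<phi>0) ^ n" by (simp add: power_mult_distrib)
    also have "\<dots> \<le> exp (- \<kappa>) ^ n"
      by (rule power_mono[OF phi_bound(2)]) (use phi_bound(1) in simp)
    also have "\<dots> = exp (- \<kappa> * real n)" by (simp add: exp_of_nat_mult[symmetric] mult.commute)
    also have "\<dots> \<le> Bc / (real n + 1) ^ 5"
    proof -
      have "real (n+1) ^ 5 * exp (- \<kappa> * real n) \<le> Bc"
        using poly_exp_bound[OF kappa_pos n] by (simp add: Bc_def)
      then show ?thesis by (simp add: field_simps)
    qed
    also have "\<dots> = (Bc * (a + \<mu>)^4 / a^4 / (real n + 1)) * (a^4 / ((a+\<mu>)^4 * (real n + 1)^4))"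
      using alg5[of a "a + \<mu>" "real n + 1" Bc] apos mu_pos by (simp add: add_pos_pos)
    also have "\<dots> \<le> (Bc * (a + \<mu>)^4 / a^4 / (real n + 1)) * f0\<^sup>2"
      by (rule mult_left_mono)
        (use f0_lower[OF al apos mu_pos, of n] kappa_pos apos mu_pos in \<open>auto simp: f0_def f_def T_def Bc_def\<close>)
    also have "\<dots> = Bc * (a + \<mu>)^4 / a^4 * f0\<^sup>2 / (real n + 1)" by simp
    finally show ?thesis .
  qed
  finally show "(\<integral>\<omega>. (f (a / (S \<omega> m n + a)) - f (a / (a + real n * \<mu>)))\<^sup>2 \<partial>PiM I (\<lambda>_. N))
     \<le> C0 * (f (a / (a + real n * \<mu>)))\<^sup>2 / (real n + 1)"
    unfolding f0_def T_def C0_def by (simp add: add_divide_distrib distrib_right)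
qed

end



lemma S_dep: assumes "\<And>j. j < n \<Longrightarrow> \<omega> (m, j) = \<omega>' (m, j)" shows "S \<omega> m n = S \<omega>' m n"
  unfolding S_def using assms by (intro sum.cong) auto

lemma cross:
  fixes M m m' n :: nat
  assumes mM: "m < M" "m' < M" "m \<noteq> m'"
  shows "(\<integral>\<omega>. f (a / (S \<omega> m n + a)) * f (a / (S \<omega> m' n + a)) \<partial>PiM ({..<M} \<times> {..<n}) (\<lambda>_. N))
    = (\<integral>\<omega>. f (a / (S \<omega> m n + a)) \<partial>PiM ({..<M} \<times> {..<n}) (\<lambda>_. N)) *
      (\<integral>\<omega>. f (a / (S \<omega> m' n + a)) \<partial>PiM ({..<M} \<times> {..<n}) (\<lambda>_. N))"
    "integrable (PiM ({..<M} \<times> {..<n}) (\<lambda>_. N)) (\<lambda>\<omega>. f (a / (S \<omega> m n + a)) * f (a / (S \<omega> m' n + a)))"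
proof -
  define I0 where "I0 = {..<M} \<times> {..<n}"
  define A where "A = {m} \<times> {..<n}"
  define B where "B = I0 - A"
  have fin: "finite I0" unfolding I0_def by (intro finite_cartesian_product) auto
  have AB: "A \<union> B = I0" using mM by (auto simp: A_def B_def I0_def)
  have dis: "A \<inter> B = {}" by (auto simp: B_def)
  have finA: "finite A" "finite B" using fin AB by auto
  have r1: "\<And>j. j < n \<Longrightarrow> (m, j) \<in> I0" and r2: "\<And>j. j < n \<Longrightarrow> (m', j) \<in> I0"
    using mM by (auto simp: I0_def)
  interpret PP: prob_space "PiM I0 (\<lambda>_. N)" by (rule PPprob[OF fin r1])
  have b: "\<bar>f (a / (S x k n + a))\<bar> \<le> 1" for x k
    using f_bnd(1)[OF S_nn[of x k n]] f_bnd(2)[OF S_nn[of x k n]] by simp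
  have bb: "\<bar>f (a / (S x m n + a)) * f (a / (S x m' n + a))\<bar> \<le> 1" for x
    using b[of x m] b[of x m'] by (simp add: abs_mult mult_le_one)
  note [measurable] = F_meas[OF fin r1] F_meas[OF fin r2]
  show iFG: "integrable (PiM ({..<M} \<times> {..<n}) (\<lambda>_. N)) (\<lambda>\<omega>. f (a / (S \<omega> m n + a)) * f (a / (S \<omega> m' n + a)))"
    unfolding I0_def[symmetric] by (rule PP.integrable_const_bound[where B=1]) (use bb in auto)
  have "(\<integral>\<omega>. f (a / (S \<omega> m n + a)) * f (a / (S \<omega> m' n + a)) \<partial>PiM (A \<union> B) (\<lambda>_. N))
    = (\<integral>\<omega>. f (a / (S \<omega> m n + a)) \<partial>PiM (A \<union> B) (\<lambda>_. N)) *
      (\<integral>\<omega>. f (a / (S \<omega> m' n + a)) \<partial>PiM (A \<union> B) (\<lambda>_. N))"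
  proof (rule pim_indep[OF N finA dis])
    show "integrable (PiM (A \<union> B) (\<lambda>_. N)) (\<lambda>\<omega>. f (a / (S \<omega> m n + a)))"
      unfolding AB by (rule F_int[OF fin r1])
    show "integrable (PiM (A \<union> B) (\<lambda>_. N)) (\<lambda>\<omega>. f (a / (S \<omega> m' n + a)))"
      unfolding AB by (rule F_int[OF fin r2])
    show "integrable (PiM (A \<union> B) (\<lambda>_. N)) (\<lambda>\<omega>. f (a / (S \<omega> m n + a)) * f (a / (S \<omega> m' n + a)))"
      unfolding AB using iFG by (simp add: I0_def)
    fix \<omega> \<omega>' :: "nat \<times> nat \<Rightarrow> 'a"
    assume "\<And>k. k \<in> A \<Longrightarrow> \<omega> k = \<omega>' k"
    then have "S \<omega> m n = S \<omega>' m n" by (intro S_dep) (auto simp: A_def)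
    then show "f (a / (S \<omega> m n + a)) = f (a / (S \<omega>' m n + a))" by simp
  next
    fix \<omega> \<omega>' :: "nat \<times> nat \<Rightarrow> 'a"
    assume "\<And>k. k \<in> B \<Longrightarrow> \<omega> k = \<omega>' k"
    then have "S \<omega> m' n = S \<omega>' m' n" using mM by (intro S_dep) (auto simp: A_def B_def I0_def)
    then show "f (a / (S \<omega> m' n + a)) = f (a / (S \<omega>' m' n + a))" by simp
  qed
  then show "(\<integral>\<omega>. f (a / (S \<omega> m n + a)) * f (a / (S \<omega> m' n + a)) \<partial>PiM ({..<M} \<times> {..<n}) (\<lambda>_. N))
    = (\<integral>\<omega>. f (a / (S \<omega> m n + a)) \<partial>PiM ({..<M} \<times> {..<n}) (\<lambda>_. N)) *
      (\<integral>\<omega>. f (a / (S \<omega> m' n + a)) \<partial>PiM ({..<M} \<times> {..<n}) (\<lambda>_. N))"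
    unfolding AB I0_def .
qed


lemma var_le_moment:
  fixes P :: "'b measure" and h :: "'b \<Rightarrow> real"
  assumes PP: "prob_space P" and ih: "integrable P h" and ih2: "integrable P (\<lambda>\<omega>. (h \<omega> - c)\<^sup>2)"
  shows "(\<integral>\<omega>. (h \<omega> - integral\<^sup>L P h)\<^sup>2 \<partial>P) \<le> (\<integral>\<omega>. (h \<omega> - c)\<^sup>2 \<partial>P)"
proof -
  interpret prob_space P by fact
  define e where "e = integral\<^sup>L P h"
  have eq: "(h \<omega> - e)\<^sup>2 = (h \<omega> - c)\<^sup>2 - 2 * (e - c) * h \<omega> + (2 * (e - c) * c + (e - c)\<^sup>2)" for \<omega>
    by (simp add: power2_eq_square algebra_simps)
  have "(\<integral>\<omega>. (h \<omega> - e)\<^sup>2 \<partial>P) = (\<integral>\<omega>. (h \<omega> - c)\<^sup>2 \<partial>P) - 2 * (e - c) * e + (2 * (e - c) * c + (e - c)\<^sup>2)"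
    unfolding eq using ih ih2 by (simp add: prob_space e_def)
  also have "\<dots> = (\<integral>\<omega>. (h \<omega> - c)\<^sup>2 \<partial>P) - (e - c)\<^sup>2" by (simp add: power2_eq_square algebra_simps)
  finally show ?thesis by (simp add: e_def)
qed

lemma main_loc:
  fixes M n :: nat and D :: real
  assumes M: "M \<ge> 1" and n: "n \<ge> 1" and D: "D \<noteq> 0"
  shows "snr (PiM ({..<M} \<times> {..<n}) (\<lambda>_. N)) (\<lambda>\<omega>. (1 / real M) * (\<Sum>m<M. f (a / (S \<omega> m n + a)) * D))
    \<ge> ereal (1 / sqrt C0 * sqrt (real M * (real n + 1)))"
proof -
  define I0 where "I0 = {..<M} \<times> {..<n}"
  define P where "P = PiM I0 (\<lambda>_. N)"
  have fin: "finite I0" unfolding I0_def by (intro finite_cartesian_product) auto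
  have row: "\<And>j. j < n \<Longrightarrow> (m, j) \<in> I0" if "m < M" for m using that by (auto simp: I0_def)
  interpret PP: prob_space P unfolding P_def by (rule PPprob[OF fin row[of 0]]) (use M in auto)
  define F where "F m \<omega> = f (a / (S \<omega> m n + a))" for m :: nat and \<omega> :: "nat \<times> nat \<Rightarrow> 'a"
  define e where "e m = integral\<^sup>L P (F m)" for m :: nat
  define f0 where "f0 = f (a / (a + real n * \<mu>))"
  define X where "X \<omega> = (1 / real M) * (\<Sum>m<M. F m \<omega> * D)" for \<omega>
  have Fint: "integrable P (F m)" if "m < M" for m
    unfolding P_def F_def by (rule F_int[OF fin row[OF that]])
  have Fm: "F m \<in> borel_measurable P" if "m < M" for m using Fint[OF that] by auto
  have Fb: "0 \<le> F m \<omega>" "F m \<omega> \<le> 1" for m \<omega>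
    unfolding F_def using f_bnd(1)[OF S_nn[of \<omega> m n]] f_bnd(2)[OF S_nn[of \<omega> m n]] by auto
  have e_ge: "f0 \<le> e m" if "m < M" for m
    unfolding e_def f0_def P_def F_def by (rule L4[OF fin row[OF that]])
  have e_le: "e m \<le> 1" if "m < M" for m
  proof -
    have "e m \<le> integral\<^sup>L P (\<lambda>_. 1::real)"
      unfolding e_def by (rule integral_mono[OF Fint[OF that]]) (auto simp: Fb)
    then show ?thesis by (simp add: PP.prob_space)
  qed
  have f0nn: "0 \<le> f0" using f_bnd(1)[of "real n * \<mu>"] mu_pos by (simp add: f0_def add.commute)
  have f0pos: "0 < f0"
  proof -
    have "0 < a^4 / ((a+\<mu>)^4 * (real n + 1)^4)" using apos mu_pos by simp
    also have "\<dots> \<le> f0\<^sup>2" using f0_lower[OF al apos mu_pos, of n] by (simp add: f0_def f_def)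
    finally have "f0 \<noteq> 0" by auto
    then show ?thesis using f0nn by simp
  qed
  have Gb: "\<bar>F m \<omega> - e m\<bar> \<le> 1" if "m < M" for m \<omega>
    using Fb[of m \<omega>] e_le[OF that] e_ge[OF that] f0nn by linarith
  have Gint: "integrable P (\<lambda>\<omega>. (F m \<omega> - e m) * (F m' \<omega> - e m'))" if "m < M" "m' < M" for m m'
  proof (rule PP.integrable_const_bound[where B=1])
    show "AE x in P. norm ((F m x - e m) * (F m' x - e m')) \<le> 1"
      using Gb[OF that(1)] Gb[OF that(2)] by (auto simp: abs_mult intro!: mult_le_one)
    show "(\<lambda>\<omega>. (F m \<omega> - e m) * (F m' \<omega> - e m')) \<in> borel_measurable P"
      using Fm[OF that(1)] Fm[OF that(2)] by measurable
  qed
  have cov: "(\<integral>\<omega>. (F m \<omega> - e m) * (F m' \<omega> - e m') \<partial>P) = 0" if "m < M" "m' < M" "m \<noteq> m'" for m m'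
  proof -
    have c: "(\<integral>\<omega>. F m \<omega> * F m' \<omega> \<partial>P) = e m * e m'" "integrable P (\<lambda>\<omega>. F m \<omega> * F m' \<omega>)"
      using cross[OF that] unfolding P_def I0_def F_def e_def by auto
    have eq: "(F m \<omega> - e m) * (F m' \<omega> - e m') = F m \<omega> * F m' \<omega> - e m' * F m \<omega> - e m * F m' \<omega> + e m * e m'" for \<omega>
      by (simp add: algebra_simps)
    show ?thesis unfolding eq using c Fint[OF that(1)] Fint[OF that(2)]
      by (simp add: PP.prob_space e_def)
  qed
  have var: "(\<integral>\<omega>. (F m \<omega> - e m) * (F m \<omega> - e m) \<partial>P) \<le> C0 * f0\<^sup>2 / (real n + 1)" if "m < M" for m
  proof -
    have "(\<integral>\<omega>. (F m \<omega> - e m) * (F m \<omega> - e m) \<partial>P) = (\<integral>\<omega>. (F m \<omega> - e m)\<^sup>2 \<partial>P)"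
      by (simp add: power2_eq_square)
    also have "\<dots> \<le> (\<integral>\<omega>. (F m \<omega> - f0)\<^sup>2 \<partial>P)"
      unfolding e_def
      by (rule var_le_moment[OF PP.prob_space_axioms Fint[OF that]])
        (use L5(2)[OF fin row[OF that] n] in \<open>simp add: P_def F_def f0_def\<close>)
    also have "\<dots> \<le> C0 * f0\<^sup>2 / (real n + 1)"
      using L5(1)[OF fin row[OF that] n] by (simp add: P_def F_def f0_def)
    finally show ?thesis .
  qed
  define E0 where "E0 = (1 / real M) * (\<Sum>m<M. e m * D)"
  have EX: "integral\<^sup>L P X = E0"
    unfolding X_def E0_def e_def using Fint
    by (simp add: Bochner_Integration.integral_sum)
  have absE: "\<bar>E0\<bar> \<ge> \<bar>D\<bar> * f0"
  proof -
    have "real M * f0 \<le> (\<Sum>m<M. e m)"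
      using sum_mono[of "{..<M}" "\<lambda>_. f0" e] e_ge by simp
    then have s: "f0 \<le> (1 / real M) * (\<Sum>m<M. e m)" using M by (simp add: field_simps)
    have "E0 = D * ((1 / real M) * (\<Sum>m<M. e m))"
      unfolding E0_def by (simp add: sum_distrib_left[symmetric] sum_divide_distrib[symmetric] mult.commute)
    moreover have "0 \<le> (1 / real M) * (\<Sum>m<M. e m)" using s f0nn by linarith
    ultimately have "\<bar>E0\<bar> = \<bar>D\<bar> * ((1 / real M) * (\<Sum>m<M. e m))"
      by (metis abs_mult abs_of_nonneg)
    moreover have "\<bar>D\<bar> * f0 \<le> \<bar>D\<bar> * ((1 / real M) * (\<Sum>m<M. e m))"
      by (rule mult_left_mono[OF s]) simp
    ultimately show ?thesis by simp
  qed
  define Vb where "Vb = D\<^sup>2 * C0 * f0\<^sup>2 / (real M * (real n + 1))"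
  have Xc: "X \<omega> - E0 = (\<Sum>m<M. (D / real M) * (F m \<omega> - e m))" for \<omega>
    unfolding X_def E0_def by (simp add: sum_distrib_left sum_subtractf algebra_simps)
  have VX: "(\<integral>\<omega>. (X \<omega> - E0)\<^sup>2 \<partial>P) \<le> Vb"
  proof -
    have sq: "(X \<omega> - E0)\<^sup>2 = (\<Sum>m<M. \<Sum>m'<M. (D / real M)\<^sup>2 * ((F m \<omega> - e m) * (F m' \<omega> - e m')))" for \<omega>
      unfolding Xc by (simp add: power2_eq_square sum_product algebra_simps)
    have ii: "integrable P (\<lambda>\<omega>. (D / real M)\<^sup>2 * ((F m \<omega> - e m) * (F m' \<omega> - e m')))" if "m < M" "m' < M" for m m'
      using Gint[OF that] by simp
    have "(\<integral>\<omega>. (X \<omega> - E0)\<^sup>2 \<partial>P) = (\<Sum>m<M. \<Sum>m'<M. (D / real M)\<^sup>2 * (\<integral>\<omega>. (F m \<omega> - e m) * (F m' \<omega> - e m') \<partial>P))"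
    proof -
      have "(\<integral>\<omega>. (X \<omega> - E0)\<^sup>2 \<partial>P) = (\<Sum>m<M. \<integral>\<omega>. (\<Sum>m'<M. (D / real M)\<^sup>2 * ((F m \<omega> - e m) * (F m' \<omega> - e m'))) \<partial>P)"
        unfolding sq
        by (rule Bochner_Integration.integral_sum, rule Bochner_Integration.integrable_sum) (use ii in auto)
      also have "\<dots> = (\<Sum>m<M. \<Sum>m'<M. \<integral>\<omega>. (D / real M)\<^sup>2 * ((F m \<omega> - e m) * (F m' \<omega> - e m')) \<partial>P)"
        by (intro sum.cong refl Bochner_Integration.integral_sum) (use ii in auto)
      finally show ?thesis by simp
    qed
    also have "\<dots> = (\<Sum>m<M. (D / real M)\<^sup>2 * (\<integral>\<omega>. (F m \<omega> - e m) * (F m \<omega> - e m) \<partial>P))"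
    proof (rule sum.cong[OF refl])
      fix m assume m: "m \<in> {..<M}"
      have "(\<Sum>m'<M. (D / real M)\<^sup>2 * (\<integral>\<omega>. (F m \<omega> - e m) * (F m' \<omega> - e m') \<partial>P)) =
          (\<Sum>m'<M. if m' = m then (D / real M)\<^sup>2 * (\<integral>\<omega>. (F m \<omega> - e m) * (F m \<omega> - e m) \<partial>P) else 0)"
        using cov m by (intro sum.cong refl) auto
      also have "\<dots> = (D / real M)\<^sup>2 * (\<integral>\<omega>. (F m \<omega> - e m) * (F m \<omega> - e m) \<partial>P)"
        using m by (simp add: sum.delta)
      finally show "(\<Sum>m'<M. (D / real M)\<^sup>2 * (\<integral>\<omega>. (F m \<omega> - e m) * (F m' \<omega> - e m') \<partial>P)) =
          (D / real M)\<^sup>2 * (\<integral>\<omega>. (F m \<omega> - e m) * (F m \<omega> - e m) \<partial>P)" .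
    qed
    also have "\<dots> \<le> (\<Sum>m<M. (D / real M)\<^sup>2 * (C0 * f0\<^sup>2 / (real n + 1)))"
      using var by (intro sum_mono mult_left_mono) auto
    also have "\<dots> = Vb"
    proof -
      have "real M \<noteq> 0" "real n + 1 \<noteq> 0" using M by auto
      then show ?thesis using alg6[of "real M" "real n + 1" D C0 f0] by (simp add: Vb_def)
    qed
    finally show ?thesis .
  qed
  have V0: "0 \<le> (\<integral>\<omega>. (X \<omega> - E0)\<^sup>2 \<partial>P)" by simp
  have E0nz: "E0 \<noteq> 0"
  proof -
    have "0 < \<bar>D\<bar> * f0" using D f0pos by simp
    then show ?thesis using absE by auto
  qed
  have Xeq: "(\<lambda>\<omega>. (1 / real M) * (\<Sum>m<M. f (a / (S \<omega> m n + a)) * D)) = X"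
    by (intro ext) (simp add: X_def F_def)
  have key: "1 / sqrt C0 * sqrt (real M * (real n + 1)) \<le> \<bar>E0\<bar> / sqrt V"
    if V: "0 < V" "V \<le> Vb" for V
    by (rule snr_alg[OF D f0pos C0_pos _ V(1)]) (use V(2) absE M in \<open>auto simp: Vb_def\<close>)
  define V where "V = (\<integral>\<omega>. (X \<omega> - E0)\<^sup>2 \<partial>P)"
  have sn: "snr P X = (if V = 0 then (if E0 = 0 then 0 else \<infinity>) else ereal (\<bar>E0\<bar> / sqrt V))"
    unfolding snr_def Let_def EX V_def by simp
  have "ereal (1 / sqrt C0 * sqrt (real M * (real n + 1))) \<le> snr P X"
  proof (cases "V = 0")
    case True
    then show ?thesis using sn E0nz by simp
  next
    case False
    have "0 \<le> V" unfolding V_def by simp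
    then have "0 < V" using False by linarith
    then show ?thesis using sn False key[of V] VX by (simp add: V_def)
  qed
  then show ?thesis unfolding Xeq P_def I0_def .
qed

end

theorem theorem2:
  fixes p q :: "'a::euclidean_space \<Rightarrow> real" and \<alpha> :: real and z b :: 'a
  assumes p_meas: "p \<in> borel_measurable lborel"
    and p_pos: "\<And>y. p y > 0"
    and p_int: "integrable lborel p"
    and p_diff: "\<And>y. p differentiable (at y)"
    and q_meas: "q \<in> borel_measurable lborel"
    and q_nonneg: "\<And>y. q y \<ge> 0"
    and q_int: "integrable lborel q"
    and q_prob: "(\<integral>y. q y \<partial>lborel) = 1"
    and alpha: "0 \<le> \<alpha>" "\<alpha> < 1"
    and r: "b \<in> Basis"
    and mom4: "integrable (density lborel (\<lambda>y. ennreal (q y))) (\<lambda>y. iw p q y powr (4 * (1 - \<alpha>)))"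
    and mom12: "integrable (density lborel (\<lambda>y. ennreal (q y))) (\<lambda>y. iw p q y powr (-12 * (1 - \<alpha>)))"
    and wz: "iw p q z > 0"
    and q_diff_z: "q differentiable (at z)"
    and grad_nz: "partial_deriv (\<lambda>y. ln (iw p q y)) z b \<noteq> 0"
  shows "\<exists>c>0. \<exists>K0. \<forall>K\<ge>K0. \<forall>M\<ge>1.
           snr (sample_space q M K)
               (vr_grad_est \<alpha> (iw p q) (partial_deriv (\<lambda>y. ln (iw p q y)) z b) M K z)
             \<ge> ereal (c * sqrt (real M * real K))"
proof -
  define N where "N = density lborel (\<lambda>y. ennreal (q y))"
  define W where "W = iw p q"
  define Y where "Y y = W y powr (1 - \<alpha>)" for y
  define a where "a = W z powr (1 - \<alpha>)"
  define D where "D = partial_deriv (\<lambda>y. ln (iw p q y)) z b"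
  have [measurable]: "p \<in> borel_measurable borel" "q \<in> borel_measurable borel"
    using p_meas q_meas by auto
  have Wm[measurable]: "W \<in> borel_measurable borel"
    unfolding W_def iw_def by measurable
  have Wnn: "0 \<le> W y" for y unfolding W_def iw_def using p_pos[of y] q_nonneg[of y] by simp
  have sN: "sets N = sets borel" by (simp add: N_def)
  have measN: "h \<in> borel_measurable N" if "h \<in> borel_measurable borel" for h :: "'a \<Rightarrow> real"
    using that by (simp add: N_def measurable_cong_sets[OF sN refl])
  have NP: "prob_space N"
  proof
    have "emeasure N (space N) = (\<integral>\<^sup>+ y. ennreal (q y) \<partial>lborel)"
      by (simp add: N_def emeasure_density)
    also have "\<dots> = ennreal (\<integral>y. q y \<partial>lborel)"
      by (rule nn_integral_eq_integral[OF q_int]) (simp add: q_nonneg)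
    finally show "emeasure N (space N) = 1" by (simp add: q_prob)
  qed
  interpret NPs: prob_space N by (rule NP)
  have Yb[measurable]: "Y \<in> borel_measurable borel" unfolding Y_def by measurable
  have Ym: "Y \<in> borel_measurable N" unfolding Y_def by (rule measN) measurable
  have Ynn: "0 \<le> Y y" for y by (simp add: Y_def)
  have W4m: "(\<lambda>y. W y powr (4 * (1 - \<alpha>))) \<in> borel_measurable N" by (rule measN) measurable
  have i4: "integrable N (\<lambda>y. 1 + W y powr (4 * (1 - \<alpha>)))"
  proof -
    have "integrable N (\<lambda>y. W y powr (4 * (1 - \<alpha>)))" using mom4 by (simp add: N_def W_def)
    then show ?thesis by (rule Bochner_Integration.integrable_add[OF NPs.integrable_const])
  qed
  have bnd: "W y powr (k * (1 - \<alpha>)) \<le> 1 + W y powr (4 * (1 - \<alpha>))" if "0 \<le> k" "k \<le> 4" for y k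
  proof (cases "W y \<le> 1")
    case True
    have "W y powr (k * (1 - \<alpha>)) \<le> 1"
      using True Wnn[of y] that alpha by (intro powr_le1) auto
    then show ?thesis by (smt (verit) powr_ge_zero)
  next
    case False
    have "W y powr (k * (1 - \<alpha>)) \<le> W y powr (4 * (1 - \<alpha>))"
    proof (rule powr_mono)
      show "k * (1 - \<alpha>) \<le> 4 * (1 - \<alpha>)" using that alpha by (intro mult_right_mono) auto
      show "1 \<le> W y" using False by simp
    qed
    then show ?thesis by simp
  qed
  have iY: "integrable N Y"
    by (rule Bochner_Integration.integrable_bound[OF i4 Ym])
      (use bnd[of 1] Ynn in \<open>auto simp: Y_def intro!: AE_I2\<close>)
  have Y2: "(Y y)\<^sup>2 = W y powr (2 * (1 - \<alpha>))" for y
    unfolding Y_def power2_eq_square powr_add[symmetric] by simp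
  have W2m: "(\<lambda>y. W y powr (2 * (1 - \<alpha>))) \<in> borel_measurable N" by (rule measN) measurable
  have iY2: "integrable N (\<lambda>y. (Y y)\<^sup>2)"
    by (rule Bochner_Integration.integrable_bound[OF i4]) 
      (use W2m bnd[of 2] in \<open>auto simp: Y2 intro!: AE_I2\<close>)
  have mupos: "integral\<^sup>L N Y > 0"
  proof -
    have Im: "(\<lambda>y. q y * Y y) \<in> borel_measurable lborel" unfolding Y_def by measurable
    have iqY: "integrable lborel (\<lambda>y. q y * Y y)"
      using iY unfolding N_def
      by (subst (asm) integrable_density) (auto simp: q_nonneg Y_def)
    have eq: "integral\<^sup>L N Y = (\<integral>y. q y * Y y \<partial>lborel)"
      unfolding N_def by (subst integral_density) (auto simp: q_nonneg Y_def)
    have nn: "0 \<le> integral\<^sup>L N Y" using Ynn by simp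
    show ?thesis
    proof (rule ccontr)
      assume "\<not> integral\<^sup>L N Y > 0"
      then have "(\<integral>y. q y * Y y \<partial>lborel) = 0" using nn eq by simp
      then have "AE y in lborel. q y * Y y = 0"
        using integral_nonneg_eq_0_iff_AE[OF iqY] q_nonneg Ynn by auto
      then have "AE y in lborel. q y = 0"
      proof (rule AE_mp, intro AE_I2 impI)
        fix y assume h: "q y * Y y = 0"
        show "q y = 0"
        proof (rule ccontr)
          assume "q y \<noteq> 0"
          then have "q y > 0" using q_nonneg[of y] by simp
          then have "W y > 0" using p_pos[of y] by (simp add: W_def iw_def)
          then have "Y y > 0" by (simp add: Y_def)
          then show False using h \<open>q y > 0\<close> by simp
        qed
      qed
      then have "(\<integral>y. q y \<partial>lborel) = 0" by (rule integral_eq_zero_AE)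
      then show False using q_prob by simp
    qed
  qed
  have apos: "a > 0" using wz by (simp add: a_def W_def)
  have al: "0 \<le> \<alpha>" "\<alpha> \<le> 1" using alpha by auto
  interpret L: setting N Y \<alpha> a
    by standard (use NP Ym Ynn iY iY2 mupos al apos in auto)
  show ?thesis
  proof (intro exI[of _ "1 / sqrt L.C0"] conjI exI[of _ "2::nat"] allI impI)
    show "0 < 1 / sqrt L.C0" using L.C0_pos by simp
    fix K M :: nat assume K: "2 \<le> K" and M: "1 \<le> M"
    define n where "n = K - 1"
    have n: "n \<ge> 1" and Kn: "real K = real n + 1" using K by (auto simp: n_def)
    have eqf: "vr_grad_est \<alpha> (iw p q) (partial_deriv (\<lambda>y. ln (iw p q y)) z b) M K z =
       (\<lambda>\<omega>. (1 / real M) * (\<Sum>m<M. L.f (a / (L.S \<omega> m n + a)) * D))"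
      by (intro ext) (simp add: vr_grad_est_def gm_def L.f_def L.S_def n_def D_def W_def Y_def a_def add.commute)
    have "sample_space q M K = PiM ({..<M} \<times> {..<n}) (\<lambda>_. N)"
      by (simp add: sample_space_def N_def n_def)
    then show "ereal (1 / sqrt L.C0 * sqrt (real M * real K)) \<le>
        snr (sample_space q M K) (vr_grad_est \<alpha> (iw p q) (partial_deriv (\<lambda>y. ln (iw p q y)) z b) M K z)"
      using L.main_loc[OF M n grad_nz[folded D_def]] unfolding eqf Kn by simp
  qed
qed


end
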